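(* Let $\mathsf H=\mathsf H_1\times\cdots\times\mathsf H_N$ with $\mathsf H_n=\mathbb R^{N_n}$, and $\mathsf G=\mathsf G_1\times\cdots\times\mathsf G_M$ with $\mathsf G_m=\mathbb R^{M_m}$. Let $D:\mathsf H\to\mathsf G$ be a linear operator written in blocks $D=(D_{m,n})_{1\le m\le M,1\le n\le N}$ with $D_{m,n}:\mathsf H_n\to\mathsf G_m$, and consider the hypergraph, the distribution over $K$ workers and all the index sets and sub-operators defined in the context. Let $\alpha,\beta>0$ and assume: (i) $h:\mathsf H\to\mathbb R$ is $\lambda_h$-Lipschitz differentiable ($\lambda_h>0$); (ii) $h(x)=\sum_{k=1}^K h_k(x_k)$ and $f(x)=\sum_{k=1}^K f_k(x_k)$ with $h_k:\mathsf H_k\to\mathbb R$, $f_k:\mathsf H_k\to]-\infty,+\infty]$; (iii) $g(v)=\sum_{m=1}^M g_m(v_m)$ with $g_m:\mathsf G_m\to]-\infty,+\infty]$; (iv) $\phi_\alpha(v,u)=\sum_{m=1}^M\phi_{m,\alpha}(v_m,u_m)$ with $\phi_{m,\alpha}(v_m,u_m)=\frac{1}{2\alpha^2}\|v_m-u_m\|^2$, and $\psi_\beta(u)=\sum_{m=1}^M\frac{1}{2\beta^2}\|u_m\|^2$. Let $\gamma\in\,]0,(\lambda_h+\|D\|^2/\alpha^2)^{-1}[$, and for each $k$ let $\mathcal K_{z_k,\alpha}(v_k,z_k,u_k)$ be a transition kernel on $\mathsf G_k$ with invariant distribution $\pi_{k,\alpha}(z_k\mid v_k,u_k)\propto\exp\big(-\sum_{m\in\overline{\mathbb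 E}_k}(g_m(z_m)+\phi_{m,\alpha}(v_m,z_m-u_m))\big)$. Distributed algorithm (A). Each worker $k$ stores $x_k^{(0)}\in\mathsf H_k$, $z_k^{(0)},u_k^{(0)}\in\mathsf G_k$, and the blocks of $D$ it needs. Initialization: each worker $k$ sends $(x_n^{(0)})_{n\in\mathbb V_{(k',k)}}$ to every $k'\in\mathcal S_k$, receives $(x_n^{(0)})_{n\in\mathbb V_{(k,k')}}$ from every $k'\in\mathcal R_k$, and sets $v_k^{(0)}=(v_m^{(0)})_{m\in\overline{\mathbb E}_k}$ with $v_m^{(0)}=D_{m,k}x_k^{(0)}$ if $m\in\mathbb E_k$ and $v_m^{(0)}=D_{m,\overline{\mathcal W}_m}x^{(0)}_{\overline{\mathcal W}_m}$ if $m\in\mathbb E_{\mathcal R_k}$. Then for $t=0,1,\dots,T$, every worker $k$ (in parallel): 1. computes $d_m^{(t)}=\frac{1}{\alpha^2}\big(v_m^{(t)}-(z_m^{(t)}-u_m^{(t)})\big)$ for $m\in\overline{\mathbb E}_k$; 2. for each $k'\in\mathcal R_k$, computes $\widetilde d_{(k',k)}^{(t)}=\sum_{m\in\mathbb E_{(k,k')}}D_{m,k'}^*d_m^{(t)}$ and sends it to worker $k'$; for each $k'\in\mathcal S_k$ receives from worker $k'$ the analogous quantity $\widetilde d_{(k,k')}^{(t)}=\sum_{m\in\mathbb E_{(k',k)}}D_{m,k}^*d_m^{(t)}$; 3. sets $\delta_k^{(t)}=\sum_{m\in\overline{\mathbb E}_k}D_{m,k}^*d_m^{(t)}+\sum_{k'\in\mathcal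 S_k}\widetilde d_{(k,k')}^{(t)}$ and $x_k^{(t+1)}=\mathrm{prox}_{\gamma f_k}\big(x_k^{(t)}-\gamma\nabla h_k(x_k^{(t)})-\gamma\delta_k^{(t)}+\sqrt{2\gamma}\,w_k^{(t)}\big)$; 4. sends $(x_n^{(t+1)})_{n\in\mathbb V_{(k',k)}}$ to each $k'\in\mathcal S_k$, receives $(x_n^{(t+1)})_{n\in\mathbb V_{(k,k')}}$ from each $k'\in\mathcal R_k$, and sets $v_m^{(t+1)}=D_{m,k}x_k^{(t+1)}$ for $m\in\mathbb E_k$, $v_m^{(t+1)}=D_{m,\overline{\mathcal W}_m}x^{(t+1)}_{\overline{\mathcal W}_m}$ for $m\in\mathbb E_{\mathcal R_k}$, $v_k^{(t+1)}=(v_m^{(t+1)})_{m\in\overline{\mathbb E}_k}$; 5. draws $z_k^{(t+1)}\sim\mathcal K_{z_k,\alpha}(v_k^{(t+1)},z_k^{(t)},u_k^{(t)})$ and $u_k^{(t+1)}\sim\mathcal N\big(\frac{\beta^2}{\alpha^2+\beta^2}(z_k^{(t+1)}-v_k^{(t+1)}),\frac{\alpha^2+\beta^2}{\alpha^2\beta^2}\mathbf I\big)$. Here, for each $k$, $(w_k^{(t)})_t$ are i.i.d. standard Gaussian vectors in $\mathsf H_k$. Centralized algorithm (B). Start from $x^{(0)}\in\mathsf H$, $v^{(0)}=Dx^{(0)}$, $(z^{(0)},u^{(0)})\in\mathsf G^2$, and for $t=0,\dots,T$: $x^{(t+1)}=\mathrm{prox}_{\gamma f}\big(x^{(t)}-\gamma\nabla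 h(x^{(t)})-\gamma D^*\nabla\phi_\alpha(\cdot,z^{(t)}-u^{(t)})(v^{(t)})+\sqrt{2\gamma}\,w^{(t)}\big)$, $v^{(t+1)}=Dx^{(t+1)}$, $z^{(t+1)}\sim\mathcal K_{z,\alpha}(v^{(t+1)},z^{(t)},u^{(t)})$, $u^{(t+1)}\sim\mathcal N\big(\frac{\beta^2}{\alpha^2+\beta^2}(z^{(t+1)}-v^{(t+1)}),\frac{\alpha^2+\beta^2}{\alpha^2\beta^2}\mathbf I\big)$, where $(w^{(t)})_t$ are i.i.d. standard Gaussian in $\mathsf H$ and $\mathcal K_{z,\alpha}$ is a kernel with invariant distribution $\pi_\alpha(z\mid v,u)\propto\exp(-g(z)-\phi_\alpha(v,z-u))$. Then Algorithm (A) is equivalent to Algorithm (B): with $x^{(t)}=(x_k^{(t)})_{1\le k\le K}$, $z^{(t)}=(z_k^{(t)})_k$, $u^{(t)}=(u_k^{(t)})_k$ (blocks reassembled according to the partitions $(\mathbb V_k)_k$ and $(\overline{\mathbb E}_k)_k$), $w^{(t)}=(w_k^{(t)})_k$, and $\mathcal K_{z,\alpha}$ taken to be the product of the kernels $\mathcal K_{z_k,\alpha}$, the iterates produced by (A) follow exactly the recursion of (B); in particular $v^{(t)}=(v_k^{(t)})_k=Dx^{(t)}$ and $(\delta_k^{(t)})_k=D^*\nabla\phi_\alpha(\cdot,z^{(t)}-u^{(t)})(Dx^{(t)})$.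
   Context: Notation: for $x\in\mathsf H$, $x=(x_n)_{1\le n\le N}$ with $x_n\in\mathsf H_n$; for $v\in\mathsf G$, $v=(v_m)_{1\le m\le M}$. $\mathrm{prox}$ denotes the proximity operator, $D^*$ the adjoint of $D$, $\mathcal N(\mu,\Sigma)$ a Gaussian distribution with mean $\mu$ and covariance $\Sigma$. Hypergraph: the hyperedges are $e_m=\{n\in\{1,\dots,N\}: D_{m,n}\neq 0\}$, $m=1,\dots,M$. Distribution over workers $\{1,\dots,K\}$ ($K\le N$), chosen by the user: a partition $(\mathbb V_k)_{1\le k\le K}$ of $\{1,\dots,N\}$ (worker $k$ stores $x_k=(x_n)_{n\in\mathbb V_k}\in\mathsf H_k=\prod_{n\in\mathbb V_k}\mathsf H_n$), and for each $m$ a worker $k_m$ with $e_m\cap\mathbb V_{k_m}\neq\emptyset$. Define $\overline{\mathbb E}_k=\{m:k_m=k\}$ (a partition of $\{1,\dots,M\}$; $\mathsf G_k=\prod_{m\in\overline{\mathbb E}_k}\mathsf G_m$, $v_k=(v_m)_{m\in\overline{\mathbb E}_k}$); $\mathcal W_m=\{k\neq k_m:\exists n\in e_m\cap\mathbb V_k\}$; $\mathbb E_k=\{m:k_m=k,\ \mathcal W_m=\emptyset\}$; $\mathbb E_{(k,k')}=\{m:k_m=k,\ k'\in\mathcal W_m\}$; $\mathcal R_k=\{k'\neq k:\mathbb E_{(k,k')}\neq\emptyset\}$; $\mathcal S_k=\{k'\neq k: k\in\mathcal R_{k'}\}$; $\mathbb E_{\mathcal R_k}=\bigcup_{k'\in\mathcal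 R_k}\mathbb E_{(k,k')}=\{m:k_m=k,\ \mathcal W_m\neq\emptyset\}$; $\mathbb V_{(k,k')}=\{n\in\mathbb V_{k'}:\exists m\in\mathbb E_{(k,k')},\ n\in e_m\}$; $\mathbb V_{\overline{\mathcal W}_m}=\mathbb V_{k_m}\cup\bigcup_{k'\in\mathcal W_m}\mathbb V_{(k_m,k')}$, $x_{\overline{\mathcal W}_m}=(x_n)_{n\in\mathbb V_{\overline{\mathcal W}_m}}$. Sub-operators: $D_{m,k}=(D_{m,n})_{n\in\mathbb V_k}:\mathsf H_k\to\mathsf G_m$ and $D_{m,\overline{\mathcal W}_m}=(D_{m,n})_{n\in\mathbb V_{\overline{\mathcal W}_m}}$. Worker $k$ stores $D_{m,k}$ for $m\in\mathbb E_k$ and $D_{m,\overline{\mathcal W}_m}$ for $m\in\mathbb E_{\mathcal R_k}$. *)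

theory Defs
  imports "HOL-Analysis.Analysis"
begin

text \<open>Coordinates of H are the elements of a finite type 'h; blkH i in {1..N} tells to which
 block H_n the coordinate i belongs (so H_n = R^{N_n} with N_n = number of such coordinates).
 Likewise for G with 'g and blkG.
 A vector of a product subspace (e.g. H_k, G_k, G_m) is represented by a vector of the
 ambient space vanishing on the other coordinates.\<close>

record ('h::finite, 'g::finite) cfg =
  cN :: nat
  cM :: nat
  cK :: nat
  cblkH :: "'h \<Rightarrow> nat"
  cblkG :: "'g \<Rightarrow> nat"
  cD :: "real^'h^'g"
  cV :: "nat \<Rightarrow> nat set"
  ckm :: "nat \<Rightarrow> nat"

definition resV :: "('i::finite \<Rightarrow> nat) \<Rightarrow> nat set \<Rightarrow> real^'i \<Rightarrow> real^'i" where
  "resV blk A x = (\<chi> i. if blk i \<in> A then x$i else 0)"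

definition subsp :: "('i::finite \<Rightarrow> nat) \<Rightarrow> nat set \<Rightarrow> (real^'i) set" where
  "subsp blk A = {x. \<forall>i. blk i \<notin> A \<longrightarrow> x$i = 0}"

definition hedge :: "('h::finite,'g::finite) cfg \<Rightarrow> nat \<Rightarrow> nat set" where
  "hedge C m = {n \<in> {1..cN C}. \<exists>j i. cblkG C j = m \<and> cblkH C i = n \<and> cD C $ j $ i \<noteq> 0}"

definition Ebar :: "('h::finite,'g::finite) cfg \<Rightarrow> nat \<Rightarrow> nat set" where
  "Ebar C k = {m \<in> {1..cM C}. ckm C m = k}"

definition Wset :: "('h::finite,'g::finite) cfg \<Rightarrow> nat \<Rightarrow> nat set" where
  "Wset C m = {k \<in> {1..cK C}. k \<noteq> ckm C m \<and> (\<exists>n \<in> hedge C m. n \<in> cV C k)}"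

definition E0 :: "('h::finite,'g::finite) cfg \<Rightarrow> nat \<Rightarrow> nat set" where
  "E0 C k = {m \<in> Ebar C k. Wset C m = {}}"

definition Epair :: "('h::finite,'g::finite) cfg \<Rightarrow> nat \<Rightarrow> nat \<Rightarrow> nat set" where
  "Epair C k k' = {m \<in> Ebar C k. k' \<in> Wset C m}"

definition Rset :: "('h::finite,'g::finite) cfg \<Rightarrow> nat \<Rightarrow> nat set" where
  "Rset C k = {k' \<in> {1..cK C}. k' \<noteq> k \<and> Epair C k k' \<noteq> {}}"

definition Sset :: "('h::finite,'g::finite) cfg \<Rightarrow> nat \<Rightarrow> nat set" where
  "Sset C k = {k' \<in> {1..cK C}. k' \<noteq> k \<and> k \<in> Rset C k'}"

definition ER :: "('h::finite,'g::finite) cfg \<Rightarrow> nat \<Rightarrow> nat set" where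
  "ER C k = (\<Union>k' \<in> Rset C k. Epair C k k')"

definition Vpair :: "('h::finite,'g::finite) cfg \<Rightarrow> nat \<Rightarrow> nat \<Rightarrow> nat set" where
  "Vpair C k k' = {n \<in> cV C k'. \<exists>m \<in> Epair C k k'. n \<in> hedge C m}"

definition VW :: "('h::finite,'g::finite) cfg \<Rightarrow> nat \<Rightarrow> nat set" where
  "VW C m = cV C (ckm C m) \<union> (\<Union>k' \<in> Wset C m. Vpair C (ckm C m) k')"

definition subop :: "('h::finite,'g::finite) cfg \<Rightarrow> nat \<Rightarrow> nat set \<Rightarrow> real^'h \<Rightarrow> real^'g" where
  "subop C m A x = resV (cblkG C) {m} (cD C *v resV (cblkH C) A x)"

definition subadj :: "('h::finite,'g::finite) cfg \<Rightarrow> nat \<Rightarrow> nat set \<Rightarrow> real^'g \<Rightarrow> real^'h" where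
  "subadj C m A d = resV (cblkH C) A (transpose (cD C) *v resV (cblkG C) {m} d)"

definition grad :: "(real^'i::finite \<Rightarrow> real) \<Rightarrow> real^'i \<Rightarrow> real^'i" where
  "grad f x = (THE g. (f has_derivative (\<lambda>d. g \<bullet> d)) (at x))"

definition prox_on :: "(real^'i::finite) set \<Rightarrow> real \<Rightarrow> (real^'i \<Rightarrow> ereal) \<Rightarrow> real^'i \<Rightarrow> (real^'i) set" where
  "prox_on S \<gamma> f x = {y \<in> S. \<forall>y' \<in> S.
      f y + ereal (norm (y - x)^2 / (2*\<gamma>)) \<le> f y' + ereal (norm (y' - x)^2 / (2*\<gamma>))}"

definition phi :: "('h::finite,'g::finite) cfg \<Rightarrow> real \<Rightarrow> real^'g \<Rightarrow> real^'g \<Rightarrow> real" where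
  "phi C \<alpha> v u = (\<Sum>m = 1..cM C. norm (resV (cblkG C) {m} (v - u))^2 / (2*\<alpha>^2))"

text \<open>Distributed algorithm quantities. X k is the state x_k of worker k (at a given time),
 Z k, U k the states z_k, u_k.\<close>

definition vA :: "('h::finite,'g::finite) cfg \<Rightarrow> (nat \<Rightarrow> real^'h) \<Rightarrow> nat \<Rightarrow> real^'g" where
  "vA C X m = (let k = ckm C m in
     if m \<in> E0 C k then subop C m (cV C k) (X k)
     else subop C m (VW C m)
       (resV (cblkH C) (cV C k) (X k) + (\<Sum>k' \<in> Wset C m. resV (cblkH C) (Vpair C k k') (X k'))))"

definition vk :: "('h::finite,'g::finite) cfg \<Rightarrow> (nat \<Rightarrow> real^'h) \<Rightarrow> nat \<Rightarrow> real^'g" where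
  "vk C X k = (\<Sum>m \<in> Ebar C k. vA C X m)"

definition dA :: "('h::finite,'g::finite) cfg \<Rightarrow> real \<Rightarrow> (nat \<Rightarrow> real^'h) \<Rightarrow> (nat \<Rightarrow> real^'g)
    \<Rightarrow> (nat \<Rightarrow> real^'g) \<Rightarrow> nat \<Rightarrow> real^'g" where
  "dA C \<alpha> X Z U m = (1 / \<alpha>^2) *\<^sub>R (vA C X m - resV (cblkG C) {m} (Z (ckm C m) - U (ckm C m)))"

text \<open>dtil C .. a b = tilde d_{(a,b)} = sum over m in E_{(b,a)} of D_{m,a}^* d_m (computed by b, sent to a).\<close>
definition dtil :: "('h::finite,'g::finite) cfg \<Rightarrow> real \<Rightarrow> (nat \<Rightarrow> real^'h) \<Rightarrow> (nat \<Rightarrow> real^'g)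
    \<Rightarrow> (nat \<Rightarrow> real^'g) \<Rightarrow> nat \<Rightarrow> nat \<Rightarrow> real^'h" where
  "dtil C \<alpha> X Z U a b = (\<Sum>m \<in> Epair C b a. subadj C m (cV C a) (dA C \<alpha> X Z U m))"

definition deltaA :: "('h::finite,'g::finite) cfg \<Rightarrow> real \<Rightarrow> (nat \<Rightarrow> real^'h) \<Rightarrow> (nat \<Rightarrow> real^'g)
    \<Rightarrow> (nat \<Rightarrow> real^'g) \<Rightarrow> nat \<Rightarrow> real^'h" where
  "deltaA C \<alpha> X Z U k = (\<Sum>m \<in> Ebar C k. subadj C m (cV C k) (dA C \<alpha> X Z U m))
      + (\<Sum>k' \<in> Sset C k. dtil C \<alpha> X Z U k k')"

text \<open>Product kernel (random-mapping representation): sampler of worker k applied to the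
 G_k-blocks, with independent noises r k.\<close>
definition Kprod :: "('h::finite,'g::finite) cfg \<Rightarrow> (nat \<Rightarrow> real^'g \<Rightarrow> real^'g \<Rightarrow> real^'g \<Rightarrow> 'r \<Rightarrow> real^'g)
    \<Rightarrow> real^'g \<Rightarrow> real^'g \<Rightarrow> real^'g \<Rightarrow> (nat \<Rightarrow> 'r) \<Rightarrow> real^'g" where
  "Kprod C samp v z u r = (\<Sum>k = 1..cK C. let P = resV (cblkG C) (Ebar C k) in samp k (P v) (P z) (P u) (r k))"

end

theory Submission
  imports Defs
begin

lemma vec_eqI: "(\<And>i. x $ i = y $ i) \<Longrightarrow> x = y"
  by (simp add: vec_eq_iff)

lemma resV_nth[simp]: "resV b A x $ i = (if b i \<in> A then x $ i else 0)"
  by (simp add: resV_def)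
lemma subsp_iff: "x \<in> subsp b A \<longleftrightarrow> (\<forall>i. b i \<notin> A \<longrightarrow> x $ i = 0)"
  by (simp add: subsp_def)
lemma resV_add: "resV b A (x + y) = resV b A x + resV b A y"
  by (simp add: vec_eq_iff)
lemma resV_diff: "resV b A (x - y) = resV b A x - resV b A y"
  by (simp add: vec_eq_iff)
lemma resV_scaleR: "resV b A (c *\<^sub>R x) = c *\<^sub>R resV b A x"
  by (simp add: vec_eq_iff)
lemma resV_sum: "resV b A (\<Sum>k\<in>I. f k) = (\<Sum>k\<in>I. resV b A (f k))"
  by (simp add: vec_eq_iff sum.neutral)
lemma resV_resV: "resV b A (resV b B x) = resV b (A \<inter> B) x"
  by (simp add: vec_eq_iff)
lemma resV_empty: "resV b {} x = 0"
  by (simp add: vec_eq_iff)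
lemma resV_in_subsp: "resV b A x \<in> subsp b A"
  by (simp add: subsp_def)
lemma resV_subsp: "x \<in> subsp b A \<Longrightarrow> resV b B x = resV b (A \<inter> B) x"
  by (auto simp: vec_eq_iff subsp_def)
lemma resV_id: "x \<in> subsp b A \<Longrightarrow> resV b A x = x"
  by (auto simp: vec_eq_iff subsp_def)
lemma resV_all: "(\<And>i. b i \<in> A) \<Longrightarrow> resV b A x = x"
  by (auto simp: vec_eq_iff)
lemma subsp_add: "x \<in> subsp b A \<Longrightarrow> y \<in> subsp b A \<Longrightarrow> x + y \<in> subsp b A"
  by (auto simp: subsp_def)
lemma subsp_diff: "x \<in> subsp b A \<Longrightarrow> y \<in> subsp b A \<Longrightarrow> x - y \<in> subsp b A"
  by (auto simp: subsp_def)
lemma subsp_scaleR: "x \<in> subsp b A \<Longrightarrow> c *\<^sub>R x \<in> subsp b A"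
  by (auto simp: subsp_def)
lemma subsp_sum: "(\<And>k. k \<in> I \<Longrightarrow> f k \<in> subsp b A) \<Longrightarrow> (\<Sum>k\<in>I. f k) \<in> subsp b A"
  by (auto simp: subsp_def intro!: sum.neutral)
lemma subsp_mono: "x \<in> subsp b A \<Longrightarrow> A \<subseteq> B \<Longrightarrow> x \<in> subsp b B"
  by (auto simp: subsp_def)

lemma resV_partition:
  assumes "finite I" "\<And>k k'. k \<in> I \<Longrightarrow> k' \<in> I \<Longrightarrow> k \<noteq> k' \<Longrightarrow> A k \<inter> A k' = {}"
  shows "(\<Sum>k\<in>I. resV b (A k) x) = resV b (\<Union>k\<in>I. A k) x"
proof (rule vec_eqI)
  fix i
  show "(\<Sum>k\<in>I. resV b (A k) x) $ i = resV b (\<Union>k\<in>I. A k) x $ i"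
  proof (cases "\<exists>k\<in>I. b i \<in> A k")
    case True
    then obtain k0 where k0: "k0 \<in> I" "b i \<in> A k0" by blast
    have "(\<Sum>k\<in>I. resV b (A k) x $ i) = resV b (A k0) x $ i + (\<Sum>k\<in>I-{k0}. resV b (A k) x $ i)"
      using assms(1) k0(1) by (simp add: sum.remove)
    also have "(\<Sum>k\<in>I-{k0}. resV b (A k) x $ i) = 0"
      using assms(2)[of k0] k0 by (intro sum.neutral) auto
    finally show ?thesis using k0 by auto
  next
    case False
    then show ?thesis by (auto intro!: sum.neutral)
  qed
qed

lemma nth_sum_single:
  assumes "finite I" "k0 \<in> I" "\<And>k. k \<in> I \<Longrightarrow> k \<noteq> k0 \<Longrightarrow> f k $ i = 0"
  shows "(\<Sum>k\<in>I. f k) $ i = f k0 $ i"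
proof -
  have "(\<Sum>k\<in>I. f k $ i) = f k0 $ i + (\<Sum>k\<in>I-{k0}. f k $ i)"
    using assms by (simp add: sum.remove)
  also have "(\<Sum>k\<in>I-{k0}. f k $ i) = 0" using assms by (intro sum.neutral) auto
  finally show ?thesis by simp
qed

lemma grad_eqI:
  fixes f :: "real^'i::finite \<Rightarrow> real"
  assumes "(f has_derivative (\<lambda>d. g \<bullet> d)) (at x)"
  shows "grad f x = g"
  unfolding grad_def
proof (rule the_equality)
  show "(f has_derivative (\<lambda>d. g \<bullet> d)) (at x)" by fact
  fix g' assume "(f has_derivative (\<lambda>d. g' \<bullet> d)) (at x)"
  then have "(\<lambda>d. g' \<bullet> d) = (\<lambda>d. g \<bullet> d)" using assms by (rule has_derivative_unique)
  then have "g' \<bullet> (g' - g) = g \<bullet> (g' - g)" by metis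
  then have "(g' - g) \<bullet> (g' - g) = 0" by (simp add: inner_diff_left)
  then show "g' = g" by simp
qed

lemma grad_works:
  fixes f :: "real^'i::finite \<Rightarrow> real"
  assumes "f differentiable (at x)"
  shows "(f has_derivative (\<lambda>d. grad f x \<bullet> d)) (at x)"
proof -
  obtain f' where f': "(f has_derivative f') (at x)" using assms by (auto simp: differentiable_def)
  then have lin: "linear f'" using has_derivative_linear by blast
  define g where "g = (\<Sum>i\<in>Basis. f' i *\<^sub>R i)"
  have "f' d = g \<bullet> d" for d
  proof -
    have "f' d = f' (\<Sum>i\<in>Basis. (d \<bullet> i) *\<^sub>R i)" by (simp add: euclidean_representation)
    also have "\<dots> = (\<Sum>i\<in>Basis. (d \<bullet> i) * f' i)"
      using lin by (simp add: linear_sum linear_scale)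
    also have "\<dots> = g \<bullet> d" by (simp add: g_def inner_sum_right inner_commute mult.commute)
    finally show ?thesis .
  qed
  then have "f' = (\<lambda>d. g \<bullet> d)" by auto
  with f' have "(f has_derivative (\<lambda>d. g \<bullet> d)) (at x)" by simp
  moreover then have "grad f x = g" by (rule grad_eqI)
  ultimately show ?thesis by simp
qed

lemma finite_Ebar[simp]: "finite (Ebar C k)" by (simp add: Ebar_def)
lemma finite_Wset[simp]: "finite (Wset C m)" by (simp add: Wset_def)
lemma finite_Sset[simp]: "finite (Sset C k)" by (simp add: Sset_def)
lemma finite_Epair[simp]: "finite (Epair C k k')"
  by (rule finite_subset[of _ "Ebar C k"]) (auto simp: Epair_def)

lemma sum_partition_nth:
  assumes "finite I" "\<And>k k'. k \<in> I \<Longrightarrow> k' \<in> I \<Longrightarrow> k \<noteq> k' \<Longrightarrow> A k \<inter> A k' = {}"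
    "\<And>k. k \<in> I \<Longrightarrow> X k \<in> subsp b (A k)" "k0 \<in> I" "b i \<in> A k0"
  shows "(\<Sum>k\<in>I. X k) $ i = X k0 $ i"
proof (rule nth_sum_single)
  fix k assume k: "k \<in> I" "k \<noteq> k0"
  then have "b i \<notin> A k" using assms(2)[of k k0] assms(4,5) by blast
  then show "X k $ i = 0" using assms(3)[OF k(1)] by (simp add: subsp_def)
qed (use assms in auto)

lemma resV_sum_partition:
  assumes "finite I" "\<And>k k'. k \<in> I \<Longrightarrow> k' \<in> I \<Longrightarrow> k \<noteq> k' \<Longrightarrow> A k \<inter> A k' = {}"
    "\<And>k. k \<in> I \<Longrightarrow> X k \<in> subsp b (A k)" "k0 \<in> I"
  shows "resV b (A k0) (\<Sum>k\<in>I. X k) = X k0"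
proof (rule vec_eqI)
  fix i show "resV b (A k0) (\<Sum>k\<in>I. X k) $ i = X k0 $ i"
    using sum_partition_nth[OF assms(1,2,3,4), where i=i] assms(3)[OF assms(4)]
    by (auto simp: subsp_def)
qed

lemma norm_partition:
  fixes x :: "real^'i::finite"
  assumes "finite I" "\<And>k k'. k \<in> I \<Longrightarrow> k' \<in> I \<Longrightarrow> k \<noteq> k' \<Longrightarrow> A k \<inter> A k' = {}"
    "\<And>i. b i \<in> (\<Union>k\<in>I. A k)"
  shows "norm x ^ 2 = (\<Sum>k\<in>I. norm (resV b (A k) x) ^ 2)"
proof -
  have "(\<Sum>k\<in>I. norm (resV b (A k) x) ^ 2) = (\<Sum>k\<in>I. \<Sum>i\<in>UNIV. if b i \<in> A k then x$i * x$i else 0)"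
    by (simp add: power2_norm_eq_inner inner_vec_def if_distrib cong: if_cong)
  also have "\<dots> = (\<Sum>i\<in>UNIV. \<Sum>k\<in>I. if b i \<in> A k then x$i * x$i else 0)"
    by (rule sum.swap)
  also have "\<dots> = (\<Sum>i\<in>UNIV. x$i * x$i)"
  proof (rule sum.cong[OF refl])
    fix i
    obtain k0 where k0: "k0 \<in> I" "b i \<in> A k0" using assms(3)[of i] by blast
    have "(\<Sum>k\<in>I. if b i \<in> A k then x$i * x$i else 0) = (if b i \<in> A k0 then x$i * x$i else 0)
       + (\<Sum>k\<in>I-{k0}. if b i \<in> A k then x$i * x$i else 0)"
      using assms(1) k0 by (simp add: sum.remove)
    also have "(\<Sum>k\<in>I-{k0}. if b i \<in> A k then x$i * x$i else 0) = 0"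
      using assms(2)[of k0] k0 by (intro sum.neutral) auto
    finally show "(\<Sum>k\<in>I. if b i \<in> A k then x$i * x$i else 0) = x$i * x$i" using k0 by simp
  qed
  also have "\<dots> = norm x ^ 2" by (simp add: power2_norm_eq_inner inner_vec_def)
  finally show ?thesis by simp
qed

lemma inner_resV: "resV b A x \<bullet> y = x \<bullet> resV b A y"
  by (auto simp: inner_vec_def intro!: sum.cong)

lemma linear_resV: "linear (resV b A)"
  by (rule linearI) (simp_all add: resV_add resV_scaleR)

lemma bounded_linear_resV: "bounded_linear (resV b A :: real^'i::finite \<Rightarrow> _)"
  using linear_resV linear_conv_bounded_linear by blast

locale setting =
  fixes C :: "('h::finite, 'g::finite) cfg"
  assumes blkH: "\<And>i. cblkH C i \<in> {1..cN C}" and blkG: "\<And>j. cblkG C j \<in> {1..cM C}"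
    and V_cover: "(\<Union>k \<in> {1..cK C}. cV C k) = {1..cN C}"
    and V_disj: "\<And>k k'. k \<in> {1..cK C} \<Longrightarrow> k' \<in> {1..cK C} \<Longrightarrow> k \<noteq> k' \<Longrightarrow> cV C k \<inter> cV C k' = {}"
    and km: "\<And>m. m \<in> {1..cM C} \<Longrightarrow> ckm C m \<in> {1..cK C}"
begin

lemma Ebar_disj: "k \<noteq> k' \<Longrightarrow> Ebar C k \<inter> Ebar C k' = {}"
  by (auto simp: Ebar_def)

lemma blkH_cover: "\<exists>k\<in>{1..cK C}. cblkH C i \<in> cV C k"
  using blkH[of i] V_cover by blast

lemma D_local: "resV (cblkG C) {m} (cD C *v y) = resV (cblkG C) {m} (cD C *v resV (cblkH C) (hedge C m) y)"
proof (rule vec_eqI)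
  fix j
  show "resV (cblkG C) {m} (cD C *v y) $ j = resV (cblkG C) {m} (cD C *v resV (cblkH C) (hedge C m) y) $ j"
  proof (cases "cblkG C j = m")
    case True
    have "(\<Sum>i\<in>UNIV. cD C $ j $ i * y $ i) = (\<Sum>i\<in>UNIV. cD C $ j $ i * resV (cblkH C) (hedge C m) y $ i)"
    proof (rule sum.cong[OF refl])
      fix i
      show "cD C $ j $ i * y $ i = cD C $ j $ i * resV (cblkH C) (hedge C m) y $ i"
        using True blkH[of i] by (auto simp: hedge_def)
    qed
    then show ?thesis using True by (simp add: matrix_vector_mult_def)
  qed simp
qed

lemma Dt_local:
  assumes "A \<inter> hedge C m = {}"
  shows "resV (cblkH C) A (transpose (cD C) *v resV (cblkG C) {m} d) = 0"
proof (rule vec_eqI)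
  fix i
  show "resV (cblkH C) A (transpose (cD C) *v resV (cblkG C) {m} d) $ i = 0 $ i"
  proof (cases "cblkH C i \<in> A")
    case True
    have "(\<Sum>j\<in>UNIV. cD C $ j $ i * resV (cblkG C) {m} d $ j) = 0"
    proof (rule sum.neutral, intro ballI)
      fix j
      show "cD C $ j $ i * resV (cblkG C) {m} d $ j = 0"
        using True assms blkH[of i] by (auto simp: hedge_def)
    qed
    then show ?thesis using True by (simp add: matrix_vector_mult_def transpose_def)
  qed simp
qed

end

context setting begin

lemma x_nth:
  assumes X: "\<And>k. k \<in> {1..cK C} \<Longrightarrow> X k \<in> subsp (cblkH C) (cV C k)"
    and k0: "k0 \<in> {1..cK C}" "cblkH C i \<in> cV C k0"
  shows "(\<Sum>k = 1..cK C. X k) $ i = X k0 $ i"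
  by (rule sum_partition_nth[where A="cV C" and b="cblkH C", OF _ _ X k0]) (use V_disj in auto)

lemma resV_x:
  assumes X: "\<And>k. k \<in> {1..cK C} \<Longrightarrow> X k \<in> subsp (cblkH C) (cV C k)"
    and k0: "k0 \<in> {1..cK C}"
  shows "resV (cblkH C) (cV C k0) (\<Sum>k = 1..cK C. X k) = X k0"
  by (rule resV_sum_partition[where A="cV C" and b="cblkH C", OF _ _ X k0]) (use V_disj in auto)

lemma vA_eq:
  assumes X: "\<And>k. k \<in> {1..cK C} \<Longrightarrow> X k \<in> subsp (cblkH C) (cV C k)"
    and m: "m \<in> {1..cM C}"
  shows "vA C X m = resV (cblkG C) {m} (cD C *v (\<Sum>k = 1..cK C. X k))"
proof -
  let ?x = "\<Sum>k = 1..cK C. X k"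
  let ?k = "ckm C m"
  have kk: "?k \<in> {1..cK C}" using km m by blast
  have mE: "m \<in> Ebar C ?k" using m by (simp add: Ebar_def)
  show ?thesis
  proof (cases "m \<in> E0 C ?k")
    case True
    then have W: "Wset C m = {}" by (simp add: E0_def)
    have "resV (cblkH C) (hedge C m) (resV (cblkH C) (cV C ?k) (X ?k)) = resV (cblkH C) (hedge C m) ?x"
    proof (rule vec_eqI)
      fix i
      obtain k0 where k0: "k0 \<in> {1..cK C}" "cblkH C i \<in> cV C k0" using blkH_cover by blast
      show "resV (cblkH C) (hedge C m) (resV (cblkH C) (cV C ?k) (X ?k)) $ i = resV (cblkH C) (hedge C m) ?x $ i"
      proof (cases "cblkH C i \<in> hedge C m")
        case True
        have "k0 = ?k"
        proof (rule ccontr)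
          assume "k0 \<noteq> ?k"
          then have "k0 \<in> Wset C m" using k0 True by (auto simp: Wset_def)
          then show False using W by simp
        qed
        then show ?thesis using True k0 x_nth[OF X k0] by simp
      qed simp
    qed
    note eq = this
    have "vA C X m = resV (cblkG C) {m} (cD C *v resV (cblkH C) (cV C ?k) (X ?k))"
      unfolding vA_def Let_def subop_def using True by (simp only: if_True)
    also have "\<dots> = resV (cblkG C) {m} (cD C *v resV (cblkH C) (hedge C m) (resV (cblkH C) (cV C ?k) (X ?k)))"
      by (rule D_local)
    also have "\<dots> = resV (cblkG C) {m} (cD C *v resV (cblkH C) (hedge C m) ?x)"
      by (simp only: eq)
    also have "\<dots> = resV (cblkG C) {m} (cD C *v ?x)" by (rule D_local[symmetric])
    finally show ?thesis .
  next
    case False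
    let ?y = "resV (cblkH C) (cV C ?k) (X ?k) + (\<Sum>k' \<in> Wset C m. resV (cblkH C) (Vpair C ?k k') (X k'))"
    have "resV (cblkH C) (hedge C m) (resV (cblkH C) (VW C m) ?y) = resV (cblkH C) (hedge C m) ?x"
    proof (rule vec_eqI)
      fix i
      obtain k0 where k0: "k0 \<in> {1..cK C}" "cblkH C i \<in> cV C k0" using blkH_cover by blast
      show "resV (cblkH C) (hedge C m) (resV (cblkH C) (VW C m) ?y) $ i = resV (cblkH C) (hedge C m) ?x $ i"
      proof (cases "cblkH C i \<in> hedge C m")
        case hi: True
        show ?thesis
        proof (cases "k0 = ?k")
          case True
          have VW: "cblkH C i \<in> VW C m" using k0 True by (simp add: VW_def)
          have "(\<Sum>k' \<in> Wset C m. resV (cblkH C) (Vpair C ?k k') (X k')) $ i = 0"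
            unfolding sum_component
          proof (rule sum.neutral, intro ballI)
            fix k' assume k': "k' \<in> Wset C m"
            then have "cblkH C i \<notin> cV C k'" using V_disj[of k' k0] k0 True by (auto simp: Wset_def)
            then show "resV (cblkH C) (Vpair C ?k k') (X k') $ i = 0" by (auto simp: Vpair_def)
          qed
          then show ?thesis using hi VW k0 True x_nth[OF X k0] by simp
        next
          case False
          have kW: "k0 \<in> Wset C m" using False k0 hi by (auto simp: Wset_def)
          have mP: "m \<in> Epair C ?k k0" using mE kW by (simp add: Epair_def)
          have iP: "cblkH C i \<in> Vpair C ?k k0" using k0 mP hi by (auto simp: Vpair_def)
          have VW: "cblkH C i \<in> VW C m" using kW iP by (auto simp: VW_def)
          have "(\<Sum>k' \<in> Wset C m. resV (cblkH C) (Vpair C ?k k') (X k')) $ i = resV (cblkH C) (Vpair C ?k k0) (X k0) $ i"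
          proof (rule nth_sum_single[OF _ kW], simp)
            fix k' assume k': "k' \<in> Wset C m" "k' \<noteq> k0"
            then have "cblkH C i \<notin> cV C k'" using V_disj[of k' k0] k0 by (auto simp: Wset_def)
            then show "resV (cblkH C) (Vpair C ?k k') (X k') $ i = 0" by (auto simp: Vpair_def)
          qed
          moreover have "cblkH C i \<notin> cV C ?k" using V_disj[of ?k k0] kk k0 False by auto
          ultimately show ?thesis using hi VW iP k0 x_nth[OF X k0] by simp
        qed
      qed simp
    qed
    note eq = this
    have "vA C X m = resV (cblkG C) {m} (cD C *v resV (cblkH C) (VW C m) ?y)"
      unfolding vA_def Let_def subop_def using False by (simp only: if_False)
    also have "\<dots> = resV (cblkG C) {m} (cD C *v resV (cblkH C) (hedge C m) (resV (cblkH C) (VW C m) ?y))"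
      by (rule D_local)
    also have "\<dots> = resV (cblkG C) {m} (cD C *v resV (cblkH C) (hedge C m) ?x)"
      by (simp only: eq)
    also have "\<dots> = resV (cblkG C) {m} (cD C *v ?x)" by (rule D_local[symmetric])
    finally show ?thesis .
  qed
qed

end

context setting begin

lemma vk_eq:
  assumes X: "\<And>k. k \<in> {1..cK C} \<Longrightarrow> X k \<in> subsp (cblkH C) (cV C k)"
    and k: "k \<in> {1..cK C}"
  shows "vk C X k = resV (cblkG C) (Ebar C k) (cD C *v (\<Sum>k = 1..cK C. X k))"
proof -
  have "vk C X k = (\<Sum>m\<in>Ebar C k. resV (cblkG C) {m} (cD C *v (\<Sum>k = 1..cK C. X k)))"
    unfolding vk_def by (rule sum.cong[OF refl], rule vA_eq[OF X]) (auto simp: Ebar_def)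
  also have "\<dots> = resV (cblkG C) (\<Union>m\<in>Ebar C k. {m}) (cD C *v (\<Sum>k = 1..cK C. X k))"
    by (rule resV_partition) auto
  finally show ?thesis by simp
qed

lemma sum_vk:
  assumes X: "\<And>k. k \<in> {1..cK C} \<Longrightarrow> X k \<in> subsp (cblkH C) (cV C k)"
  shows "(\<Sum>k = 1..cK C. vk C X k) = cD C *v (\<Sum>k = 1..cK C. X k)"
proof -
  have "(\<Sum>k = 1..cK C. vk C X k) = (\<Sum>k = 1..cK C. resV (cblkG C) (Ebar C k) (cD C *v (\<Sum>k = 1..cK C. X k)))"
    by (rule sum.cong[OF refl], rule vk_eq[OF X]) auto
  also have "\<dots> = resV (cblkG C) (\<Union>k\<in>{1..cK C}. Ebar C k) (cD C *v (\<Sum>k = 1..cK C. X k))"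
    by (rule resV_partition) (auto simp: Ebar_def)
  also have "\<dots> = cD C *v (\<Sum>k = 1..cK C. X k)"
  proof (rule resV_all)
    fix j
    have "cblkG C j \<in> Ebar C (ckm C (cblkG C j))" using blkG[of j] by (simp add: Ebar_def)
    then show "cblkG C j \<in> (\<Union>k\<in>{1..cK C}. Ebar C k)" using km[OF blkG[of j]] by blast
  qed
  finally show ?thesis .
qed

lemma resV_Z:
  assumes Z: "\<And>k. k \<in> {1..cK C} \<Longrightarrow> Z k \<in> subsp (cblkG C) (Ebar C k)"
    and m: "m \<in> {1..cM C}"
  shows "resV (cblkG C) {m} (Z (ckm C m)) = resV (cblkG C) {m} (\<Sum>k = 1..cK C. Z k)"
proof (rule vec_eqI)
  fix j
  show "resV (cblkG C) {m} (Z (ckm C m)) $ j = resV (cblkG C) {m} (\<Sum>k = 1..cK C. Z k) $ j"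
  proof (cases "cblkG C j = m")
    case True
    have "(\<Sum>k = 1..cK C. Z k) $ j = Z (ckm C m) $ j"
      by (rule sum_partition_nth[where A="Ebar C" and b="cblkG C", OF _ _ Z km[OF m]])
        (use True m Ebar_disj in \<open>auto simp: Ebar_def\<close>)
    then show ?thesis by simp
  qed simp
qed

lemma dA_eq:
  assumes X: "\<And>k. k \<in> {1..cK C} \<Longrightarrow> X k \<in> subsp (cblkH C) (cV C k)"
    and Z: "\<And>k. k \<in> {1..cK C} \<Longrightarrow> Z k \<in> subsp (cblkG C) (Ebar C k)"
    and U: "\<And>k. k \<in> {1..cK C} \<Longrightarrow> U k \<in> subsp (cblkG C) (Ebar C k)"
    and m: "m \<in> {1..cM C}"
  shows "dA C \<alpha> X Z U m = resV (cblkG C) {m} ((1 / \<alpha>^2) *\<^sub>R (cD C *v (\<Sum>k = 1..cK C. X k)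
             - ((\<Sum>k = 1..cK C. Z k) - (\<Sum>k = 1..cK C. U k))))"
  unfolding dA_def resV_diff resV_scaleR by (simp only: resV_Z[OF Z m] resV_Z[OF U m] vA_eq[OF X m])

lemma swap1:
  "(\<Sum>k = 1..cK C. \<Sum>m\<in>Ebar C k. F k m) = (\<Sum>m = 1..cM C. F (ckm C m) m)"
proof -
  have "(\<Sum>k = 1..cK C. \<Sum>m\<in>Ebar C k. F k m) = (\<Sum>k\<in>{1..cK C}. \<Sum>m\<in>{m. m \<in> {1..cM C} \<and> ckm C m = k}. F k m)"
    by (simp add: Ebar_def)
  also have "\<dots> = (\<Sum>m\<in>{1..cM C}. \<Sum>k\<in>{k. k \<in> {1..cK C} \<and> ckm C m = k}. F k m)"
    by (rule sum.swap_restrict) auto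
  also have "\<dots> = (\<Sum>m = 1..cM C. F (ckm C m) m)"
  proof (rule sum.cong[OF refl])
    fix m assume "m \<in> {1..cM C}"
    then have "{k. k \<in> {1..cK C} \<and> ckm C m = k} = {ckm C m}" using km by auto
    then show "(\<Sum>k\<in>{k. k \<in> {1..cK C} \<and> ckm C m = k}. F k m) = F (ckm C m) m" by simp
  qed
  finally show ?thesis .
qed

lemma swap2:
  "(\<Sum>k = 1..cK C. \<Sum>k'\<in>Sset C k. \<Sum>m\<in>Epair C k' k. F k m) = (\<Sum>m = 1..cM C. \<Sum>k\<in>Wset C m. F k m)"
proof -
  have "(\<Sum>k = 1..cK C. \<Sum>k'\<in>Sset C k. \<Sum>m\<in>Epair C k' k. F k m)
      = (\<Sum>k\<in>{1..cK C}. \<Sum>m\<in>{m. m \<in> {1..cM C} \<and> k \<in> Wset C m}. F k m)"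
  proof (rule sum.cong[OF refl])
    fix k assume k: "k \<in> {1..cK C}"
    have "(\<Sum>k'\<in>Sset C k. \<Sum>m\<in>Epair C k' k. F k m) = (\<Sum>m\<in>(\<Union>k'\<in>Sset C k. Epair C k' k). F k m)"
      by (rule sum.UNION_disjoint[symmetric]) (auto simp: Epair_def Ebar_def)
    also have "(\<Union>k'\<in>Sset C k. Epair C k' k) = {m. m \<in> {1..cM C} \<and> k \<in> Wset C m}"
    proof (intro equalityI subsetI)
      fix m assume "m \<in> (\<Union>k'\<in>Sset C k. Epair C k' k)"
      then show "m \<in> {m. m \<in> {1..cM C} \<and> k \<in> Wset C m}" by (auto simp: Epair_def Ebar_def)
    next
      fix m assume m: "m \<in> {m. m \<in> {1..cM C} \<and> k \<in> Wset C m}"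
      have kk: "ckm C m \<in> {1..cK C}" using km m by auto
      have ne: "k \<noteq> ckm C m" using m by (auto simp: Wset_def)
      have mP: "m \<in> Epair C (ckm C m) k" using m by (auto simp: Epair_def Ebar_def)
      have "k \<in> Rset C (ckm C m)" using mP k ne by (auto simp: Rset_def)
      then have "ckm C m \<in> Sset C k" using kk ne by (auto simp: Sset_def)
      then show "m \<in> (\<Union>k'\<in>Sset C k. Epair C k' k)" using mP by blast
    qed
    finally show "(\<Sum>k'\<in>Sset C k. \<Sum>m\<in>Epair C k' k. F k m) = (\<Sum>m\<in>{m. m \<in> {1..cM C} \<and> k \<in> Wset C m}. F k m)" .
  qed
  also have "\<dots> = (\<Sum>m\<in>{1..cM C}. \<Sum>k\<in>{k. k \<in> {1..cK C} \<and> k \<in> Wset C m}. F k m)"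
    by (rule sum.swap_restrict) auto
  also have "\<dots> = (\<Sum>m = 1..cM C. \<Sum>k\<in>Wset C m. F k m)"
    by (rule sum.cong[OF refl], rule sum.cong) (auto simp: Wset_def)
  finally show ?thesis .
qed

lemma per_m:
  assumes m: "m \<in> {1..cM C}"
  shows "(\<Sum>k = 1..cK C. resV (cblkH C) (cV C k) (transpose (cD C) *v resV (cblkG C) {m} d))
    = resV (cblkH C) (cV C (ckm C m)) (transpose (cD C) *v resV (cblkG C) {m} d)
      + (\<Sum>k\<in>Wset C m. resV (cblkH C) (cV C k) (transpose (cD C) *v resV (cblkG C) {m} d))"
proof -
  let ?F = "\<lambda>k. resV (cblkH C) (cV C k) (transpose (cD C) *v resV (cblkG C) {m} d)"
  have sub: "insert (ckm C m) (Wset C m) \<subseteq> {1..cK C}" using km[OF m] by (auto simp: Wset_def)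
  have "sum ?F {1..cK C} = sum ?F (insert (ckm C m) (Wset C m)) + sum ?F ({1..cK C} - insert (ckm C m) (Wset C m))"
    using sub by (metis add.commute finite_atLeastAtMost sum.subset_diff)
  also have "sum ?F ({1..cK C} - insert (ckm C m) (Wset C m)) = 0"
  proof (rule sum.neutral, intro ballI)
    fix k assume k: "k \<in> {1..cK C} - insert (ckm C m) (Wset C m)"
    have "cV C k \<inter> hedge C m = {}" using k by (auto simp: Wset_def)
    then show "?F k = 0" by (rule Dt_local)
  qed
  also have "sum ?F (insert (ckm C m) (Wset C m)) = ?F (ckm C m) + sum ?F (Wset C m)"
    by (rule sum.insert) (auto simp: Wset_def)
  finally show ?thesis by simp
qed

end

context setting begin

lemma deltaA_sum:
  assumes X: "\<And>k. k \<in> {1..cK C} \<Longrightarrow> X k \<in> subsp (cblkH C) (cV C k)"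
    and Z: "\<And>k. k \<in> {1..cK C} \<Longrightarrow> Z k \<in> subsp (cblkG C) (Ebar C k)"
    and U: "\<And>k. k \<in> {1..cK C} \<Longrightarrow> U k \<in> subsp (cblkG C) (Ebar C k)"
  shows "(\<Sum>k = 1..cK C. deltaA C \<alpha> X Z U k) = transpose (cD C) *v ((1 / \<alpha>^2) *\<^sub>R (cD C *v (\<Sum>k = 1..cK C. X k)
             - ((\<Sum>k = 1..cK C. Z k) - (\<Sum>k = 1..cK C. U k))))"
proof -
  define y where "y = (1 / \<alpha>^2) *\<^sub>R (cD C *v (\<Sum>k = 1..cK C. X k)
             - ((\<Sum>k = 1..cK C. Z k) - (\<Sum>k = 1..cK C. U k)))"
  define E where "E m = transpose (cD C) *v resV (cblkG C) {m} y" for m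
  have dA: "subadj C m A (dA C \<alpha> X Z U m) = resV (cblkH C) A (E m)" if "m \<in> {1..cM C}" for m A
    unfolding subadj_def by (simp only: dA_eq[OF X Z U that] E_def y_def resV_resV Int_absorb)
  have dk: "deltaA C \<alpha> X Z U k = (\<Sum>m\<in>Ebar C k. resV (cblkH C) (cV C k) (E m))
      + (\<Sum>k'\<in>Sset C k. \<Sum>m\<in>Epair C k' k. resV (cblkH C) (cV C k) (E m))" for k
    unfolding deltaA_def dtil_def
    by (intro arg_cong2[where f="(+)"] sum.cong refl dA) (auto simp: Ebar_def Epair_def)
  have "(\<Sum>k = 1..cK C. deltaA C \<alpha> X Z U k)
     = (\<Sum>m = 1..cM C. resV (cblkH C) (cV C (ckm C m)) (E m)) + (\<Sum>m = 1..cM C. \<Sum>k\<in>Wset C m. resV (cblkH C) (cV C k) (E m))"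
    unfolding dk sum.distrib swap1 swap2 ..
  also have "\<dots> = (\<Sum>m = 1..cM C. \<Sum>k = 1..cK C. resV (cblkH C) (cV C k) (E m))"
    unfolding sum.distrib[symmetric] E_def by (rule sum.cong[OF refl], rule per_m[symmetric])
  also have "\<dots> = (\<Sum>m = 1..cM C. E m)"
  proof (rule sum.cong[OF refl])
    fix m
    have "(\<Sum>k = 1..cK C. resV (cblkH C) (cV C k) (E m)) = resV (cblkH C) (\<Union>k\<in>{1..cK C}. cV C k) (E m)"
      by (rule resV_partition) (use V_disj in auto)
    also have "\<dots> = E m" by (rule resV_all) (use blkH_cover in blast)
    finally show "(\<Sum>k = 1..cK C. resV (cblkH C) (cV C k) (E m)) = E m" .
  qed
  also have "\<dots> = transpose (cD C) *v (\<Sum>m = 1..cM C. resV (cblkG C) {m} y)"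
    unfolding E_def by (simp add: linear_sum[OF matrix_vector_mul_linear] o_def)
  also have "(\<Sum>m = 1..cM C. resV (cblkG C) {m} y) = resV (cblkG C) (\<Union>m\<in>{1..cM C}. {m}) y"
    by (rule resV_partition) auto
  also have "\<dots> = y" by (rule resV_all) (use blkG in auto)
  finally show ?thesis unfolding y_def .
qed

lemma phi_eq: "phi C \<alpha> v c = norm (v - c) ^ 2 / (2 * \<alpha>^2)"
proof -
  have "norm (v - c) ^ 2 = (\<Sum>m = 1..cM C. norm (resV (cblkG C) {m} (v - c)) ^ 2)"
    by (rule norm_partition) (use blkG in auto)
  then show ?thesis unfolding phi_def by (simp add: sum_divide_distrib)
qed

lemma grad_phi: "grad (\<lambda>v. phi C \<alpha> v c) v0 = (1 / \<alpha>^2) *\<^sub>R (v0 - c)"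
proof (rule grad_eqI)
  have "((\<lambda>v. (1 / (2 * \<alpha>^2)) * ((v - c) \<bullet> (v - c))) has_derivative
      (\<lambda>d. (1 / (2 * \<alpha>^2)) * ((v0 - c) \<bullet> (d - 0) + (d - 0) \<bullet> (v0 - c)))) (at v0)"
    by (intro has_derivative_mult_right has_derivative_inner has_derivative_diff has_derivative_ident has_derivative_const)
  moreover have "(\<lambda>d. (1 / (2 * \<alpha>^2)) * ((v0 - c) \<bullet> (d - 0) + (d - 0) \<bullet> (v0 - c))) = (\<lambda>d. ((1 / \<alpha>^2) *\<^sub>R (v0 - c)) \<bullet> d)"
    by (rule ext) (simp add: inner_commute)
  moreover have "(\<lambda>v. phi C \<alpha> v c) = (\<lambda>v. (1 / (2 * \<alpha>^2)) * ((v - c) \<bullet> (v - c)))"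
    by (simp add: phi_eq power2_norm_eq_inner)
  ultimately show "((\<lambda>v. phi C \<alpha> v c) has_derivative (\<lambda>d. ((1 / \<alpha>^2) *\<^sub>R (v0 - c)) \<bullet> d)) (at v0)"
    by simp
qed

lemma h_block:
  assumes h_sep: "\<And>x. h x = (\<Sum>k = 1..cK C. hk k (resV (cblkH C) (cV C k) x))"
    and k: "k \<in> {1..cK C}"
  shows "h (resV (cblkH C) (cV C k) y) = hk k (resV (cblkH C) (cV C k) y) + (\<Sum>k'\<in>{1..cK C}-{k}. hk k' 0)"
proof -
  have "h (resV (cblkH C) (cV C k) y) = (\<Sum>k' = 1..cK C. hk k' (resV (cblkH C) (cV C k' \<inter> cV C k) y))"
    unfolding h_sep resV_resV ..
  also have "\<dots> = hk k' (resV (cblkH C) (cV C k \<inter> cV C k) y) + (\<Sum>k'\<in>{1..cK C}-{k}. hk k' (resV (cblkH C) (cV C k' \<inter> cV C k) y))"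
    if "k' = k" for k'
    using k that by (simp add: sum.remove)
  also have "(\<Sum>k'\<in>{1..cK C}-{k}. hk k' (resV (cblkH C) (cV C k' \<inter> cV C k) y)) = (\<Sum>k'\<in>{1..cK C}-{k}. hk k' 0)"
    by (rule sum.cong[OF refl]) (use V_disj k in \<open>auto simp: resV_empty\<close>)
  finally show ?thesis by simp
qed

end

context setting begin

lemma has_derivative_hk:
  assumes h_sep: "\<And>x. h x = (\<Sum>k = 1..cK C. hk k (resV (cblkH C) (cV C k) x))"
    and h_diff: "\<And>x. h differentiable (at x)"
    and k: "k \<in> {1..cK C}"
  shows "((\<lambda>y. hk k (resV (cblkH C) (cV C k) y)) has_derivative
           (\<lambda>d. resV (cblkH C) (cV C k) (grad h (resV (cblkH C) (cV C k) y)) \<bullet> d)) (at y)"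
proof -
  let ?P = "resV (cblkH C) (cV C k)"
  let ?c = "\<Sum>k'\<in>{1..cK C}-{k}. hk k' 0"
  have "((\<lambda>y. h (?P y)) has_derivative (\<lambda>d. grad h (?P y) \<bullet> ?P d)) (at y)"
    by (rule has_derivative_compose[OF bounded_linear_imp_has_derivative[OF bounded_linear_resV] grad_works[OF h_diff]])
  then have "((\<lambda>y. h (?P y) - ?c) has_derivative (\<lambda>d. grad h (?P y) \<bullet> ?P d - 0)) (at y)"
    by (intro has_derivative_diff has_derivative_const)
  moreover have "(\<lambda>y. h (?P y) - ?c) = (\<lambda>y. hk k (?P y))"
    using h_block[where h=h and hk=hk, OF h_sep k] by simp
  moreover have "(\<lambda>d. grad h (?P y) \<bullet> ?P d - 0) = (\<lambda>d. ?P (grad h (?P y)) \<bullet> d)"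
    by (simp add: inner_resV)
  ultimately show ?thesis by simp
qed

lemma grad_hk:
  assumes h_sep: "\<And>x. h x = (\<Sum>k = 1..cK C. hk k (resV (cblkH C) (cV C k) x))"
    and h_diff: "\<And>x. h differentiable (at x)"
    and k: "k \<in> {1..cK C}"
  shows "grad (\<lambda>y. hk k (resV (cblkH C) (cV C k) y)) y = resV (cblkH C) (cV C k) (grad h (resV (cblkH C) (cV C k) y))"
  by (rule grad_eqI[OF has_derivative_hk[OF h_sep h_diff k]])

lemma grad_h_sum:
  assumes h_sep: "\<And>x. h x = (\<Sum>k = 1..cK C. hk k (resV (cblkH C) (cV C k) x))"
    and h_diff: "\<And>x. h differentiable (at x)"
  shows "grad h x = (\<Sum>k = 1..cK C. grad (\<lambda>y. hk k (resV (cblkH C) (cV C k) y)) x)"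
proof (rule grad_eqI)
  have "((\<lambda>x. \<Sum>k = 1..cK C. hk k (resV (cblkH C) (cV C k) x)) has_derivative
     (\<lambda>d. \<Sum>k = 1..cK C. grad (\<lambda>y. hk k (resV (cblkH C) (cV C k) y)) x \<bullet> d)) (at x)"
    by (rule has_derivative_sum) (simp only: grad_hk[OF h_sep h_diff] has_derivative_hk[OF h_sep h_diff])
  moreover have "h = (\<lambda>x. \<Sum>k = 1..cK C. hk k (resV (cblkH C) (cV C k) x))" using h_sep by auto
  ultimately show "(h has_derivative (\<lambda>d. (\<Sum>k = 1..cK C. grad (\<lambda>y. hk k (resV (cblkH C) (cV C k) y)) x) \<bullet> d)) (at x)"
    by (simp add: inner_sum_left)
qed

lemma prox_sum:
  assumes f_sep: "\<And>x. f x = (\<Sum>k = 1..cK C. fk k (resV (cblkH C) (cV C k) x))"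
    and a: "\<And>k. k \<in> {1..cK C} \<Longrightarrow> a k \<in> subsp (cblkH C) (cV C k)"
    and y: "\<And>k. k \<in> {1..cK C} \<Longrightarrow> y k \<in> prox_on (subsp (cblkH C) (cV C k)) \<gamma> (fk k) (a k)"
  shows "(\<Sum>k = 1..cK C. y k) \<in> prox_on UNIV \<gamma> f (\<Sum>k = 1..cK C. a k)"
proof -
  have ysub: "\<And>k. k \<in> {1..cK C} \<Longrightarrow> y k \<in> subsp (cblkH C) (cV C k)"
    using y by (auto simp: prox_on_def)
  have key: "f z + ereal (norm (z - (\<Sum>k = 1..cK C. a k))^2 / (2*\<gamma>)) =
     (\<Sum>k = 1..cK C. fk k (resV (cblkH C) (cV C k) z) + ereal (norm (resV (cblkH C) (cV C k) z - a k)^2 / (2*\<gamma>)))" for z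
  proof -
    have "norm (z - (\<Sum>k = 1..cK C. a k))^2 = (\<Sum>k = 1..cK C. norm (resV (cblkH C) (cV C k) (z - (\<Sum>k = 1..cK C. a k)))^2)"
      by (rule norm_partition) (use V_disj blkH_cover in auto)
    also have "\<dots> = (\<Sum>k = 1..cK C. norm (resV (cblkH C) (cV C k) z - a k)^2)"
    proof (rule sum.cong[OF refl])
      fix k assume k: "k \<in> {1..cK C}"
      show "norm (resV (cblkH C) (cV C k) (z - (\<Sum>k = 1..cK C. a k)))^2 = norm (resV (cblkH C) (cV C k) z - a k)^2"
        by (simp only: resV_diff resV_x[OF a k])
    qed
    finally have "ereal (norm (z - (\<Sum>k = 1..cK C. a k))^2 / (2*\<gamma>))
        = (\<Sum>k = 1..cK C. ereal (norm (resV (cblkH C) (cV C k) z - a k)^2 / (2*\<gamma>)))"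
      by (simp add: sum_divide_distrib)
    then show ?thesis by (simp add: f_sep sum.distrib)
  qed
  show ?thesis unfolding prox_on_def
  proof (intro CollectI conjI ballI UNIV_I)
    fix z :: "real^'h"
    have "f (\<Sum>k = 1..cK C. y k) + ereal (norm ((\<Sum>k = 1..cK C. y k) - (\<Sum>k = 1..cK C. a k))^2 / (2*\<gamma>))
       = (\<Sum>k = 1..cK C. fk k (y k) + ereal (norm (y k - a k)^2 / (2*\<gamma>)))"
      unfolding key
    proof (rule sum.cong[OF refl])
      fix k assume k: "k \<in> {1..cK C}"
      show "fk k (resV (cblkH C) (cV C k) (\<Sum>k = 1..cK C. y k)) + ereal (norm (resV (cblkH C) (cV C k) (\<Sum>k = 1..cK C. y k) - a k)^2 / (2*\<gamma>))
         = fk k (y k) + ereal (norm (y k - a k)^2 / (2*\<gamma>))"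
        by (simp only: resV_x[OF ysub k])
    qed
    also have "\<dots> \<le> (\<Sum>k = 1..cK C. fk k (resV (cblkH C) (cV C k) z) + ereal (norm (resV (cblkH C) (cV C k) z - a k)^2 / (2*\<gamma>)))"
    proof (rule sum_mono)
      fix k assume k: "k \<in> {1..cK C}"
      show "fk k (y k) + ereal (norm (y k - a k)^2 / (2*\<gamma>)) \<le> fk k (resV (cblkH C) (cV C k) z) + ereal (norm (resV (cblkH C) (cV C k) z - a k)^2 / (2*\<gamma>))"
        using y[OF k] resV_in_subsp by (auto simp: prox_on_def)
    qed
    also have "\<dots> = f z + ereal (norm (z - (\<Sum>k = 1..cK C. a k))^2 / (2*\<gamma>))"
      unfolding key ..
    finally show "f (\<Sum>k = 1..cK C. y k) + ereal (norm ((\<Sum>k = 1..cK C. y k) - (\<Sum>k = 1..cK C. a k))^2 / (2*\<gamma>))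
      \<le> f z + ereal (norm (z - (\<Sum>k = 1..cK C. a k))^2 / (2*\<gamma>))" .
  qed
qed

end

theorem proposition2:
  fixes C :: "('h::finite, 'g::finite) cfg"
    and \<alpha> \<beta> \<gamma> lh :: real and T :: nat
    and h :: "real^'h \<Rightarrow> real" and hk :: "nat \<Rightarrow> real^'h \<Rightarrow> real"
    and f :: "real^'h \<Rightarrow> ereal" and fk :: "nat \<Rightarrow> real^'h \<Rightarrow> ereal"
    and g :: "real^'g \<Rightarrow> ereal" and gm :: "nat \<Rightarrow> real^'g \<Rightarrow> ereal"
    and xk :: "nat \<Rightarrow> nat \<Rightarrow> real^'h" and zk uk :: "nat \<Rightarrow> nat \<Rightarrow> real^'g"
    and w :: "nat \<Rightarrow> nat \<Rightarrow> real^'h" and \<zeta> :: "nat \<Rightarrow> nat \<Rightarrow> real^'g"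
    and \<xi> :: "nat \<Rightarrow> nat \<Rightarrow> 'r"
    and samp :: "nat \<Rightarrow> real^'g \<Rightarrow> real^'g \<Rightarrow> real^'g \<Rightarrow> 'r \<Rightarrow> real^'g"
  assumes blkH: "\<And>i. cblkH C i \<in> {1..cN C}" "\<And>n. n \<in> {1..cN C} \<Longrightarrow> \<exists>i. cblkH C i = n"
    and blkG: "\<And>j. cblkG C j \<in> {1..cM C}" "\<And>m. m \<in> {1..cM C} \<Longrightarrow> \<exists>j. cblkG C j = m"
    and K_pos: "1 \<le> cK C" and K_le: "cK C \<le> cN C"
    and V_nonempty: "\<And>k. k \<in> {1..cK C} \<Longrightarrow> cV C k \<noteq> {}"
    and V_cover: "(\<Union>k \<in> {1..cK C}. cV C k) = {1..cN C}"
    and V_disj: "\<And>k k'. k \<in> {1..cK C} \<Longrightarrow> k' \<in> {1..cK C} \<Longrightarrow> k \<noteq> k' \<Longrightarrow> cV C k \<inter> cV C k' = {}"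
    and km: "\<And>m. m \<in> {1..cM C} \<Longrightarrow> ckm C m \<in> {1..cK C} \<and> hedge C m \<inter> cV C (ckm C m) \<noteq> {}"
    and \<alpha>: "\<alpha> > 0" and \<beta>: "\<beta> > 0"
    and h_diff: "\<And>x. h differentiable (at x)"
    and h_lip: "lh > 0" "\<And>x y. norm (grad h x - grad h y) \<le> lh * norm (x - y)"
    and h_sep: "\<And>x. h x = (\<Sum>k = 1..cK C. hk k (resV (cblkH C) (cV C k) x))"
    and f_sep: "\<And>x. f x = (\<Sum>k = 1..cK C. fk k (resV (cblkH C) (cV C k) x))"
    and fk_val: "\<And>k x. fk k x \<noteq> -\<infinity>"
    and g_sep: "\<And>v. g v = (\<Sum>m = 1..cM C. gm m (resV (cblkG C) {m} v))"
    and gm_val: "\<And>m v. gm m v \<noteq> -\<infinity>"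
    and \<gamma>: "0 < \<gamma>" "\<gamma> < 1 / (lh + (onorm (\<lambda>x. cD C *v x))^2 / \<alpha>^2)"
    and samp_sub: "\<And>k v z u r. samp k v z u r \<in> subsp (cblkG C) (Ebar C k)"
    and init: "\<And>k. k \<in> {1..cK C} \<Longrightarrow> xk k 0 \<in> subsp (cblkH C) (cV C k)
                  \<and> zk k 0 \<in> subsp (cblkG C) (Ebar C k) \<and> uk k 0 \<in> subsp (cblkG C) (Ebar C k)"
    and noise_sub: "\<And>k t. k \<in> {1..cK C} \<Longrightarrow> w k t \<in> subsp (cblkH C) (cV C k)
                  \<and> \<zeta> k t \<in> subsp (cblkG C) (Ebar C k)"
    and step_x: "\<And>k t. k \<in> {1..cK C} \<Longrightarrow> t \<le> T \<Longrightarrow>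
        xk k (Suc t) \<in> prox_on (subsp (cblkH C) (cV C k)) \<gamma> (fk k)
          (xk k t - \<gamma> *\<^sub>R grad (\<lambda>y. hk k (resV (cblkH C) (cV C k) y)) (xk k t)
             - \<gamma> *\<^sub>R deltaA C \<alpha> (\<lambda>j. xk j t) (\<lambda>j. zk j t) (\<lambda>j. uk j t) k
             + sqrt (2*\<gamma>) *\<^sub>R w k t)"
    and step_z: "\<And>k t. k \<in> {1..cK C} \<Longrightarrow> t \<le> T \<Longrightarrow>
        zk k (Suc t) = samp k (vk C (\<lambda>j. xk j (Suc t)) k) (zk k t) (uk k t) (\<xi> k t)"
    and step_u: "\<And>k t. k \<in> {1..cK C} \<Longrightarrow> t \<le> T \<Longrightarrow>
        uk k (Suc t) = (\<beta>^2 / (\<alpha>^2 + \<beta>^2)) *\<^sub>R (zk k (Suc t) - vk C (\<lambda>j. xk j (Suc t)) k)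
          + sqrt ((\<alpha>^2 + \<beta>^2) / (\<alpha>^2 * \<beta>^2)) *\<^sub>R \<zeta> k t"
  shows "let x = (\<lambda>t. \<Sum>k = 1..cK C. xk k t); z = (\<lambda>t. \<Sum>k = 1..cK C. zk k t);
             u = (\<lambda>t. \<Sum>k = 1..cK C. uk k t); W = (\<lambda>t. \<Sum>k = 1..cK C. w k t);
             Zeta = (\<lambda>t. \<Sum>k = 1..cK C. \<zeta> k t); D = cD C
         in (\<forall>t \<le> Suc T. (\<Sum>k = 1..cK C. vk C (\<lambda>j. xk j t) k) = D *v x t)
          \<and> (\<forall>t \<le> T. (\<Sum>k = 1..cK C. deltaA C \<alpha> (\<lambda>j. xk j t) (\<lambda>j. zk j t) (\<lambda>j. uk j t) k)
                 = transpose D *v grad (\<lambda>v. phi C \<alpha> v (z t - u t)) (D *v x t))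
          \<and> (\<forall>t \<le> T.
               x (Suc t) \<in> prox_on UNIV \<gamma> f
                 (x t - \<gamma> *\<^sub>R grad h (x t)
                   - \<gamma> *\<^sub>R (transpose D *v grad (\<lambda>v. phi C \<alpha> v (z t - u t)) (D *v x t))
                   + sqrt (2*\<gamma>) *\<^sub>R W t)
             \<and> z (Suc t) = Kprod C samp (D *v x (Suc t)) (z t) (u t) (\<lambda>k. \<xi> k t)
             \<and> u (Suc t) = (\<beta>^2 / (\<alpha>^2 + \<beta>^2)) *\<^sub>R (z (Suc t) - D *v x (Suc t))
                 + sqrt ((\<alpha>^2 + \<beta>^2) / (\<alpha>^2 * \<beta>^2)) *\<^sub>R Zeta t)"
proof -
  interpret setting C
    by unfold_locales (use blkH(1) blkG(1) V_cover V_disj km in auto)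
  let ?H = "cblkH C" and ?G = "cblkG C" and ?D = "cD C"
  define x where "x = (\<lambda>t. \<Sum>k = 1..cK C. xk k t)"
  define z where "z = (\<lambda>t. \<Sum>k = 1..cK C. zk k t)"
  define u where "u = (\<lambda>t. \<Sum>k = 1..cK C. uk k t)"
  define W where "W = (\<lambda>t. \<Sum>k = 1..cK C. w k t)"
  define Zeta where "Zeta = (\<lambda>t. \<Sum>k = 1..cK C. \<zeta> k t)"
  have xsub: "xk k t \<in> subsp ?H (cV C k)" if k: "k \<in> {1..cK C}" and t: "t \<le> Suc T" for k t
  proof (cases t)
    case 0 then show ?thesis using init[OF k] by simp
  next
    case (Suc t') then show ?thesis using step_x[OF k, of t'] t by (auto simp: prox_on_def)
  qed
  have vkeq: "vk C (\<lambda>j. xk j t) k = resV ?G (Ebar C k) (?D *v x t)"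
    if k: "k \<in> {1..cK C}" and t: "t \<le> Suc T" for k t
    unfolding x_def by (rule vk_eq[OF _ k]) (use xsub t in auto)
  have vsub: "vk C (\<lambda>j. xk j t) k \<in> subsp ?G (Ebar C k)"
    if k: "k \<in> {1..cK C}" and t: "t \<le> Suc T" for k t
    using vkeq[OF k t] resV_in_subsp by metis
  have zsub: "zk k t \<in> subsp ?G (Ebar C k)" if k: "k \<in> {1..cK C}" and t: "t \<le> Suc T" for k t
  proof (cases t)
    case 0 then show ?thesis using init[OF k] by simp
  next
    case (Suc t') then show ?thesis using step_z[OF k, of t'] t samp_sub by auto
  qed
  have usub: "uk k t \<in> subsp ?G (Ebar C k)" if k: "k \<in> {1..cK C}" and t: "t \<le> Suc T" for k t
  proof (cases t)
    case 0 then show ?thesis using init[OF k] by simp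
  next
    case (Suc t')
    then have t': "t' \<le> T" using t by simp
    show ?thesis unfolding Suc step_u[OF k t'] using t'
      by (intro subsp_add subsp_scaleR subsp_diff zsub[OF k] vsub[OF k] conjunct2[OF noise_sub[OF k]]) auto
  qed
  have c1: "\<forall>t \<le> Suc T. (\<Sum>k = 1..cK C. vk C (\<lambda>j. xk j t) k) = ?D *v x t"
  proof (intro allI impI)
    fix t assume t: "t \<le> Suc T"
    show "(\<Sum>k = 1..cK C. vk C (\<lambda>j. xk j t) k) = ?D *v x t"
      unfolding x_def by (rule sum_vk) (use xsub t in auto)
  qed
  have c2: "(\<Sum>k = 1..cK C. deltaA C \<alpha> (\<lambda>j. xk j t) (\<lambda>j. zk j t) (\<lambda>j. uk j t) k)
                 = transpose ?D *v grad (\<lambda>v. phi C \<alpha> v (z t - u t)) (?D *v x t)" if t: "t \<le> T" for t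
    unfolding grad_phi x_def z_def u_def
    by (rule deltaA_sum) (use xsub zsub usub t in auto)
  have c3: "x (Suc t) \<in> prox_on UNIV \<gamma> f
                 (x t - \<gamma> *\<^sub>R grad h (x t)
                   - \<gamma> *\<^sub>R (transpose ?D *v grad (\<lambda>v. phi C \<alpha> v (z t - u t)) (?D *v x t))
                   + sqrt (2*\<gamma>) *\<^sub>R W t)" if t: "t \<le> T" for t
  proof -
    let ?gk = "\<lambda>k. grad (\<lambda>y. hk k (resV ?H (cV C k) y)) (xk k t)"
    let ?dk = "\<lambda>k. deltaA C \<alpha> (\<lambda>j. xk j t) (\<lambda>j. zk j t) (\<lambda>j. uk j t) k"
    define a where "a k = xk k t - \<gamma> *\<^sub>R ?gk k - \<gamma> *\<^sub>R ?dk k + sqrt (2*\<gamma>) *\<^sub>R w k t" for k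
    have asub: "a k \<in> subsp ?H (cV C k)" if k: "k \<in> {1..cK C}" for k
    proof -
      have "?gk k \<in> subsp ?H (cV C k)" unfolding grad_hk[OF h_sep h_diff k] by (rule resV_in_subsp)
      moreover have "?dk k \<in> subsp ?H (cV C k)"
        unfolding deltaA_def dtil_def subadj_def
        by (intro subsp_add subsp_sum resV_in_subsp)
      ultimately show ?thesis unfolding a_def using xsub[OF k] t conjunct1[OF noise_sub[OF k]]
        by (intro subsp_add subsp_scaleR subsp_diff) auto
    qed
    have "x (Suc t) \<in> prox_on UNIV \<gamma> f (\<Sum>k = 1..cK C. a k)"
      unfolding x_def by (rule prox_sum[where f=f and fk=fk, OF f_sep asub]) (use step_x t a_def in auto)
    moreover have "(\<Sum>k = 1..cK C. ?gk k) = grad h (x t)"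
    proof -
      have "grad h (x t) = (\<Sum>k = 1..cK C. grad (\<lambda>y. hk k (resV ?H (cV C k) y)) (x t))"
        by (rule grad_h_sum[OF h_sep h_diff])
      also have "\<dots> = (\<Sum>k = 1..cK C. ?gk k)"
      proof (rule sum.cong[OF refl])
        fix k assume k: "k \<in> {1..cK C}"
        have rx: "resV ?H (cV C k) (x t) = xk k t"
          unfolding x_def by (rule resV_x[OF _ k]) (use xsub t in auto)
        have rk: "resV ?H (cV C k) (xk k t) = xk k t" by (rule resV_id[OF xsub[OF k]]) (use t in auto)
        show "grad (\<lambda>y. hk k (resV ?H (cV C k) y)) (x t) = ?gk k"
          unfolding grad_hk[OF h_sep h_diff k] rx rk ..
      qed
      finally show ?thesis ..
    qed
    moreover have "(\<Sum>k = 1..cK C. a k) = x t - \<gamma> *\<^sub>R (\<Sum>k = 1..cK C. ?gk k) - \<gamma> *\<^sub>R (\<Sum>k = 1..cK C. ?dk k) + sqrt (2*\<gamma>) *\<^sub>R W t"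
      unfolding a_def x_def W_def by (simp add: sum.distrib sum_subtractf scaleR_sum_right)
    ultimately show ?thesis using c2[OF t] by simp
  qed
  have c4: "z (Suc t) = Kprod C samp (?D *v x (Suc t)) (z t) (u t) (\<lambda>k. \<xi> k t)" if t: "t \<le> T" for t
    unfolding Kprod_def Let_def z_def
  proof (rule sum.cong[OF refl])
    fix k assume k: "k \<in> {1..cK C}"
    have "resV ?G (Ebar C k) (\<Sum>k = 1..cK C. zk k t) = zk k t"
      by (rule resV_sum_partition[where A="Ebar C" and b="cblkG C", OF _ _ _ k]) (use Ebar_disj zsub t in auto)
    moreover have "resV ?G (Ebar C k) (u t) = uk k t"
      unfolding u_def
      by (rule resV_sum_partition[where A="Ebar C" and b="cblkG C", OF _ _ _ k]) (use Ebar_disj usub t in auto)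
    ultimately show "zk k (Suc t) = samp k (resV ?G (Ebar C k) (?D *v x (Suc t))) (resV ?G (Ebar C k) (\<Sum>k = 1..cK C. zk k t))
          (resV ?G (Ebar C k) (u t)) (\<xi> k t)"
      using step_z[OF k t] vkeq[OF k, of "Suc t"] t by simp
  qed
  have c5: "u (Suc t) = (\<beta>^2 / (\<alpha>^2 + \<beta>^2)) *\<^sub>R (z (Suc t) - ?D *v x (Suc t))
                 + sqrt ((\<alpha>^2 + \<beta>^2) / (\<alpha>^2 * \<beta>^2)) *\<^sub>R Zeta t" if t: "t \<le> T" for t
  proof -
    have "u (Suc t) = (\<Sum>k = 1..cK C. (\<beta>^2 / (\<alpha>^2 + \<beta>^2)) *\<^sub>R (zk k (Suc t) - vk C (\<lambda>j. xk j (Suc t)) k)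
          + sqrt ((\<alpha>^2 + \<beta>^2) / (\<alpha>^2 * \<beta>^2)) *\<^sub>R \<zeta> k t)"
      unfolding u_def using step_u t by (intro sum.cong) auto
    also have "\<dots> = (\<beta>^2 / (\<alpha>^2 + \<beta>^2)) *\<^sub>R (z (Suc t) - (\<Sum>k = 1..cK C. vk C (\<lambda>j. xk j (Suc t)) k))
                 + sqrt ((\<alpha>^2 + \<beta>^2) / (\<alpha>^2 * \<beta>^2)) *\<^sub>R Zeta t"
      unfolding z_def Zeta_def by (simp add: sum.distrib sum_subtractf scaleR_sum_right scaleR_diff_right)
    finally show ?thesis using c1 t by simp
  qed
  show ?thesis
    unfolding Let_def x_def[symmetric] z_def[symmetric] u_def[symmetric] W_def[symmetric] Zeta_def[symmetric]
    using c1 c2 c3 c4 c5 by blast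
qed

end
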